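(* Let $m,\ell\in\mathbb{N}_0$ and $d\in\mathbb{N}$ with $d\ge m+\ell$. Then there are real coefficients $a_0,\dots,a_{\lfloor m/2\rfloor}$ such that for all $x\in\mathbb{R}^d$ and $y\in\mathbb{S}^{d-1}$, $$\langle x,y\rangle^m\|x\|^{2\ell}=\sum_{i=0}^{\lfloor m/2\rfloor}a_i\,\mu^{(m-2i,\ell+i)}_{1,d}(E_{x,y},xx^* ).$$
   Context: $\mathscr{H}_d$ denotes the real symmetric $d\times d$ matrices with $\langle A,B\rangle=\operatorname{trace}(AB)$. $\mathcal{G}_{1,d}$ is the set of rank-one orthogonal projections in $\mathscr{H}_d$, with orthogonally invariant Borel probability measure $\sigma_{1,d}$. For $A,B\in\mathscr{H}_d$ and $p,q\in\mathbb{N}_0$, $\mu^{(p,q)}_{1,d}(A,B):=\int_{\mathcal{G}_{1,d}}\langle P,A\rangle^p\langle P,B\rangle^q\,d\sigma_{1,d}(P)$. For $x,y\in\mathbb{R}^d$, $E_{x,y}:=\tfrac12(xy^*+yx^* )$. *)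

theory Defs
  imports "HOL-Probability.Probability"
begin

text \<open>Real symmetric d x d matrices (d = CARD('n)) with the trace inner product.\<close>
definition hs_inner :: "real^'n^'n \<Rightarrow> real^'n^'n \<Rightarrow> real" where
  "hs_inner A B = trace (A ** B)"

definition G1 :: "(real^'n^'n) set" where
  "G1 = {P. transpose P = P \<and> P ** P = P \<and> rank P = 1}"

text \<open>Orthogonally invariant Borel probability measures on G1 (viewed as measures on
  the ambient space of matrices, concentrated on G1).\<close>
definition orth_inv_prob_on_G1 :: "(real^'n^'n) measure \<Rightarrow> bool" where
  "orth_inv_prob_on_G1 \<sigma> \<longleftrightarrow>
     sets \<sigma> = sets borel \<and> prob_space \<sigma> \<and> emeasure \<sigma> G1 = 1 \<and>
     (\<forall>Q::real^'n^'n. orthogonal_matrix Q \<longrightarrow>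
        distr \<sigma> \<sigma> (\<lambda>P. Q ** P ** transpose Q) = \<sigma>)"

definition mu1 :: "(real^'n^'n) measure \<Rightarrow> nat \<Rightarrow> nat \<Rightarrow> real^'n^'n \<Rightarrow> real^'n^'n \<Rightarrow> real" where
  "mu1 \<sigma> p q A B = (\<integral>P. (hs_inner P A) ^ p * (hs_inner P B) ^ q \<partial>\<sigma>)"

definition outer :: "real^'n \<Rightarrow> real^'n \<Rightarrow> real^'n^'n" where
  "outer x y = (\<chi> i j. x $ i * y $ j)"

definition Exy :: "real^'n \<Rightarrow> real^'n \<Rightarrow> real^'n^'n" where
  "Exy x y = (1/2) *\<^sub>R (outer x y + outer y x)"

end

theory Submission
  imports Defs
begin


definition bf :: "real^'n^'n \<Rightarrow> real^'n \<Rightarrow> real^'n \<Rightarrow> real" where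
  "bf P a b = a \<bullet> (P *v b)"

lemma bf_sum: "bf P a b = (\<Sum>i\<in>UNIV. \<Sum>j\<in>UNIV. a$i * P$i$j * b$j)"
  unfolding bf_def inner_vec_def matrix_vector_mult_def
  by (simp add: sum_distrib_left mult.assoc)

lemma meas_entry: "(\<lambda>P::real^'n^'n. P $ i $ j) \<in> borel_measurable borel"
proof -
  have "continuous_on UNIV (\<lambda>P::real^'n^'n. P $ i $ j)"
    by (intro continuous_intros)
  then show ?thesis by (rule borel_measurable_continuous_onI)
qed
lemma meas_bf[measurable]: "(\<lambda>P. bf P a b) \<in> borel_measurable borel"
  unfolding bf_sum by (intro borel_measurable_sum borel_measurable_times meas_entry borel_measurable_const)
lemma tmv: "transpose A *v (a::real^'m) = a v* (A::real^'n^'m)"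
  using vector_transpose_matrix[of a "transpose A"] by simp
lemma inner_mv: "(a::real^'m) \<bullet> ((A::real^'n^'m) *v b) = (transpose A *v a) \<bullet> b"
  unfolding tmv by (rule dot_lmul_matrix[symmetric])

lemma bf_conj: "bf (Q ** P ** transpose Q) a b = bf P (transpose Q *v a) (transpose Q *v b)"
proof -
  have "a \<bullet> ((Q ** P ** transpose Q) *v b) = a \<bullet> (Q *v (P *v (transpose Q *v b)))"
    by (simp only: matrix_vector_mul_assoc matrix_mul_assoc)
  also have "\<dots> = (transpose Q *v a) \<bullet> (P *v (transpose Q *v b))"
    by (rule inner_mv)
  finally show ?thesis by (simp add: bf_def)
qed

lemma bf_sym: "transpose P = P \<Longrightarrow> bf P a b = bf P b a"
  unfolding bf_def using inner_mv[of a P b] by (simp add: inner_commute)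

lemma bf_add_left: "bf P (a + c) b = bf P a b + bf P c b"
  by (simp add: bf_def inner_add_left)
lemma bf_add_right: "bf P a (b + c) = bf P a b + bf P a c"
  by (simp add: bf_def inner_add_right matrix_vector_right_distrib)
lemma bf_scale_left: "bf P (r *\<^sub>R a) b = r * bf P a b"
  by (simp add: bf_def)
lemma bf_scale_right: "bf P a (r *\<^sub>R b) = r * bf P a b"
  by (simp add: bf_def matrix_vector_mult_scaleR)
lemma bf_diff_left: "bf P (a - c) b = bf P a b - bf P c b"
  by (simp add: bf_def inner_diff_left)
lemma bf_diff_right: "bf P a (b - c) = bf P a b - bf P a c"
  by (simp add: bf_def inner_diff_right matrix_vector_mult_diff_distrib)

lemma G1_rank_one:
  assumes "P \<in> G1"
  shows "\<exists>u. norm u = 1 \<and> (\<forall>a b. bf P a b = (u \<bullet> a) * (u \<bullet> b))"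
proof -
  have sym: "transpose P = P" and idem: "P ** P = P" and rk: "rank P = 1"
    using assms by (auto simp: G1_def)
  have d1: "dim (range ((*v) P)) = 1" using rk by (simp add: rank_dim_range)
  obtain B where B: "B \<subseteq> range ((*v) P)" "independent B" "range ((*v) P) \<subseteq> span B" "card B = 1"
    using basis_exists[of "range ((*v) P)"] d1 by auto
  obtain v where Bv: "B = {v}" using B(4) by (meson card_1_singletonE)
  have v0: "v \<noteq> 0" using B(2) Bv by auto
  obtain z where vz: "v = P *v z" using B(1) Bv by auto
  have Pv: "P *v v = v" using vz idem by (simp add: matrix_vector_mul_assoc)
  have lam: "\<exists>c. P *v x = c *\<^sub>R v" for x
    using B(3) Bv by (auto simp: span_singleton)
  have key: "bf P a b = (v \<bullet> a) * (v \<bullet> b) / (v \<bullet> v)" for a b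
  proof -
    obtain c where c: "P *v b = c *\<^sub>R v" using lam by blast
    have "v \<bullet> (P *v b) = (P *v v) \<bullet> b"
      using inner_mv[of v P b] sym by simp
    then have "c * (v \<bullet> v) = v \<bullet> b" using c Pv by simp
    then have "c = (v \<bullet> b) / (v \<bullet> v)" using v0 by (simp add: field_simps)
    then show ?thesis using c by (simp add: bf_def inner_commute)
  qed
  define u where "u = (1 / norm v) *\<^sub>R v"
  have "norm u = 1" using v0 by (simp add: u_def)
  moreover have "bf P a b = (u \<bullet> a) * (u \<bullet> b)" for a b
    using key[of a b] v0 by (simp add: u_def power2_norm_eq_inner[symmetric] field_simps power2_eq_square)
  ultimately show ?thesis by blast
qed


lemma meas_conj: "(\<lambda>P::real^'n^'n. Q ** P ** transpose Q) \<in> borel_measurable borel"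
proof -
  have "continuous_on UNIV (\<lambda>P::real^'n^'n. Q ** P ** transpose Q)"
    unfolding matrix_matrix_mult_def transpose_def by (intro continuous_intros)
  then show ?thesis by (rule borel_measurable_continuous_onI)
qed

definition orthonormal2 :: "real^'n \<Rightarrow> real^'n \<Rightarrow> bool" where
  "orthonormal2 e f \<longleftrightarrow> norm e = 1 \<and> norm f = 1 \<and> e \<bullet> f = 0"

definition rot :: "real \<Rightarrow> real \<Rightarrow> real^'n \<Rightarrow> real^'n \<Rightarrow> real^'n \<Rightarrow> real^'n" where
  "rot c s e f v = v + ((c - 1) * (e \<bullet> v) + s * (f \<bullet> v)) *\<^sub>R e + ((c - 1) * (f \<bullet> v) - s * (e \<bullet> v)) *\<^sub>R f"

lemma rot_linear: "linear (rot c s e f)"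
  by (intro linearI) (simp_all add: rot_def inner_add_right algebra_simps scaleR_add_left)

lemma rot_norm:
  assumes o: "orthonormal2 e f" and cs: "c\<^sup>2 + s\<^sup>2 = 1"
  shows "norm (rot c s e f v) = norm v"
proof -
  have ee: "e \<bullet> e = 1" and ff: "f \<bullet> f = 1" and ef: "e \<bullet> f = 0" and fe: "f \<bullet> e = 0"
    using o by (auto simp: orthonormal2_def inner_commute power2_norm_eq_inner[symmetric])
  define A where "A = (c - 1) * (e \<bullet> v) + s * (f \<bullet> v)"
  define B where "B = (c - 1) * (f \<bullet> v) - s * (e \<bullet> v)"
  have r: "rot c s e f v = v + A *\<^sub>R e + B *\<^sub>R f" by (simp add: rot_def A_def B_def)
  have h1: "rot c s e f v \<bullet> rot c s e f v = v \<bullet> v + (2 * A * (e \<bullet> v) + 2 * B * (f \<bullet> v) + A\<^sup>2 + B\<^sup>2)"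
    unfolding r by (simp add: inner_add_left inner_add_right ee ff ef fe inner_commute power2_eq_square algebra_simps)
  have h2: "2 * A * (e \<bullet> v) + 2 * B * (f \<bullet> v) + A\<^sup>2 + B\<^sup>2 = ((e \<bullet> v)\<^sup>2 + (f \<bullet> v)\<^sup>2) * (c\<^sup>2 + s\<^sup>2 - 1)"
    by (simp add: A_def B_def power2_eq_square algebra_simps)
  have "rot c s e f v \<bullet> rot c s e f v = v \<bullet> v" using h1 h2 cs by simp
  then show ?thesis by (simp add: norm_eq_sqrt_inner)
qed

lemma rot_e: "orthonormal2 e f \<Longrightarrow> rot c s e f e = c *\<^sub>R e - s *\<^sub>R f"
  by (simp add: rot_def orthonormal2_def inner_commute power2_norm_eq_inner[symmetric] algebra_simps)

lemma rot_f: "orthonormal2 e f \<Longrightarrow> rot c s e f f = s *\<^sub>R e + c *\<^sub>R f"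
  by (simp add: rot_def orthonormal2_def inner_commute power2_norm_eq_inner[symmetric] algebra_simps)

lemma rot_matrix:
  assumes o: "orthonormal2 e f" and cs: "c\<^sup>2 + s\<^sup>2 = 1"
  shows "orthogonal_matrix (transpose (matrix (rot c s e f)))"
    "\<And>v. transpose (transpose (matrix (rot c s e f))) *v v = rot c s e f v"
proof -
  have "orthogonal_transformation (rot c s e f)"
    unfolding orthogonal_transformation using rot_linear rot_norm[OF o cs] by blast
  then show "orthogonal_matrix (transpose (matrix (rot c s e f)))"
    by (simp add: orthogonal_transformation_matrix orthogonal_matrix_transpose)
  show "\<And>v. transpose (transpose (matrix (rot c s e f))) *v v = rot c s e f v"
    by (simp add: matrix_works rot_linear)
qed


definition Wf :: "real^'n \<Rightarrow> real^'n \<Rightarrow> real^'n^'n \<Rightarrow> real" where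
  "Wf e f P = bf P e e + bf P f f"
definition Zp :: "real^'n \<Rightarrow> real^'n \<Rightarrow> real^'n^'n \<Rightarrow> complex" where
  "Zp e f P = complex_of_real (bf P e e - bf P f f) + \<i> * complex_of_real (2 * bf P e f)"
definition Zm :: "real^'n \<Rightarrow> real^'n \<Rightarrow> real^'n^'n \<Rightarrow> complex" where
  "Zm e f P = complex_of_real (bf P e e - bf P f f) - \<i> * complex_of_real (2 * bf P e f)"
definition M3 :: "real^'n \<Rightarrow> real^'n \<Rightarrow> nat \<Rightarrow> nat \<Rightarrow> nat \<Rightarrow> real^'n^'n \<Rightarrow> complex" where
  "M3 e f q r s P = complex_of_real (Wf e f P) ^ q * Zp e f P ^ r * Zm e f P ^ s"

lemma meas_M3[measurable]: "M3 e f q r s \<in> borel_measurable borel"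
  unfolding M3_def Wf_def Zp_def Zm_def by measurable

lemma rot_transform:
  assumes o: "orthonormal2 e f" and sym: "transpose P = P"
    and that: "\<And>a b. bf P' a b = bf P (rot (cos \<theta>) (sin \<theta>) e f a) (rot (cos \<theta>) (sin \<theta>) e f b)"
  shows "M3 e f q r t (P' :: real^'n^'n) = cis (2*\<theta>) ^ r * cis (-(2*\<theta>)) ^ t * M3 e f q r t P"
proof -
  define cc where "cc = cos \<theta>"
  define ss where "ss = sin \<theta>"
  note that = that[folded cc_def ss_def]
  note re = rot_e[OF o, of cc ss] and rf = rot_f[OF o, of cc ss]
  have sy: "bf P f e = bf P e f" using bf_sym[OF sym] .
  have cs: "cc\<^sup>2 + ss\<^sup>2 = 1" by (simp add: cc_def ss_def)
  have Bee: "bf P' e e = cc\<^sup>2 * bf P e e - 2 * cc * ss * bf P e f + ss\<^sup>2 * bf P f f"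
    unfolding that re by (simp add: bf_add_left bf_add_right bf_diff_left bf_diff_right bf_scale_left bf_scale_right sy power2_eq_square algebra_simps)
  have Bff: "bf P' f f = ss\<^sup>2 * bf P e e + 2 * cc * ss * bf P e f + cc\<^sup>2 * bf P f f"
    unfolding that rf by (simp add: bf_add_left bf_add_right bf_diff_left bf_diff_right bf_scale_left bf_scale_right sy power2_eq_square algebra_simps)
  have Bef: "bf P' e f = cc * ss * bf P e e + (cc\<^sup>2 - ss\<^sup>2) * bf P e f - cc * ss * bf P f f"
    unfolding that re rf by (simp add: bf_add_left bf_add_right bf_diff_left bf_diff_right bf_scale_left bf_scale_right sy power2_eq_square algebra_simps)
  have "Wf e f P' = (cc\<^sup>2 + ss\<^sup>2) * Wf e f P"
    unfolding Wf_def Bee Bff by (simp add: algebra_simps)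
  then have W: "Wf e f P' = Wf e f P" using cs by simp
  have c2: "cos (2*\<theta>) = cc\<^sup>2 - ss\<^sup>2" and s2: "sin (2*\<theta>) = 2 * ss * cc"
    by (simp_all add: cc_def ss_def cos_double sin_double power2_eq_square)
  have cis1: "cis (2*\<theta>) = Complex (cc\<^sup>2 - ss\<^sup>2) (2 * ss * cc)"
    by (simp add: complex_eq_iff c2 s2)
  have cis2: "cis (-(2*\<theta>)) = Complex (cc\<^sup>2 - ss\<^sup>2) (- (2 * ss * cc))"
    by (simp add: complex_eq_iff c2 s2)
  have Zp: "Zp e f P' = cis (2*\<theta>) * Zp e f P"
    unfolding Zp_def Bee Bff Bef cis1 by (simp add: complex_eq_iff algebra_simps power2_eq_square)
  have Zm: "Zm e f P' = cis (-(2*\<theta>)) * Zm e f P"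
    unfolding Zm_def Bee Bff Bef cis2 by (simp add: complex_eq_iff algebra_simps power2_eq_square)
  show ?thesis unfolding M3_def W Zp Zm cis1[symmetric] cis2[symmetric] by (simp add: power_mult_distrib algebra_simps)
qed



lemma split_pow:
  fixes z w :: complex
  assumes "even (p + q)"
  shows "z^p * w^q = (z*w)^(min p q) * (z^2)^((p - min p q) div 2) * (w^2)^((q - min p q) div 2)"
proof (cases "p \<le> q")
  case True
  have "even (q - p)" using assms True by auto
  then obtain j where "q - p = 2*j" by (rule evenE)
  then have j: "q = p + 2*j" using True by simp
  show ?thesis using True by (simp add: j power_mult_distrib power_add power_mult)
next
  case False
  have "even (p - q)" using assms False by auto
  then obtain j where "p - q = 2*j" by (rule evenE)
  then have j: "p = q + 2*j" using False by simp
  show ?thesis using False by (simp add: j power_mult_distrib power_add power_mult)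
qed

lemma alg_expand:
  fixes u1 u2 y1 y2 :: real and N k :: nat
  assumes kN: "k \<le> N" and ev: "even (N + k)"
  shows "complex_of_real ((u1 * (y1*u1 + y2*u2))^k * (u1^2)^((N-k) div 2)) =
    (\<Sum>a\<le>N. \<Sum>b\<le>k. (of_nat (N choose a) * of_nat (k choose b) * cnj (Complex y1 y2)^b * (Complex y1 y2)^(k-b))
       * (Complex u1 u2^(a+b) * cnj (Complex u1 u2)^(N+k-(a+b)))) / 2^(N+k)"
proof -
  define \<zeta> where "\<zeta> = Complex u1 u2"
  define \<omega> where "\<omega> = Complex y1 y2"
  have "even (N - k)" using kN ev by auto
  then obtain j where "N - k = 2*j" by (rule evenE)
  then have j: "N = k + 2*j" using kN by simp
  have h1: "(u1 * (y1*u1 + y2*u2))^k * (u1^2)^((N-k) div 2) = u1^N * (y1*u1+y2*u2)^k"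
    by (simp add: j power_mult_distrib power_add power_mult[symmetric])
  have h2: "complex_of_real u1 = (\<zeta> + cnj \<zeta>)/2" by (simp add: complex_eq_iff \<zeta>_def)
  have h3: "complex_of_real (y1*u1+y2*u2) = (\<zeta>*cnj \<omega> + cnj \<zeta> * \<omega>)/2"
    by (simp add: complex_eq_iff \<zeta>_def \<omega>_def algebra_simps)
  have "complex_of_real ((u1 * (y1*u1 + y2*u2))^k * (u1^2)^((N-k) div 2))
      = (\<zeta> + cnj \<zeta>)^N * (\<zeta>*cnj \<omega> + cnj \<zeta> * \<omega>)^k / 2^(N+k)"
    unfolding h1 of_real_mult of_real_power h2 h3 by (simp add: power_divide power_add)
  also have "(\<zeta> + cnj \<zeta>)^N = (\<Sum>a\<le>N. of_nat (N choose a) * \<zeta>^a * cnj \<zeta>^(N-a))"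
    by (rule binomial_ring)
  also have "(\<zeta>*cnj \<omega> + cnj \<zeta> * \<omega>)^k = (\<Sum>b\<le>k. of_nat (k choose b) * (\<zeta>*cnj \<omega>)^b * (cnj \<zeta> * \<omega>)^(k-b))"
    by (rule binomial_ring)
  also have "(\<Sum>a\<le>N. of_nat (N choose a) * \<zeta>^a * cnj \<zeta>^(N-a)) * (\<Sum>b\<le>k. of_nat (k choose b) * (\<zeta>*cnj \<omega>)^b * (cnj \<zeta> * \<omega>)^(k-b))
     = (\<Sum>a\<le>N. \<Sum>b\<le>k. (of_nat (N choose a) * \<zeta>^a * cnj \<zeta>^(N-a)) * (of_nat (k choose b) * (\<zeta>*cnj \<omega>)^b * (cnj \<zeta> * \<omega>)^(k-b)))"
    by (rule sum_product)
  also have "\<dots> = (\<Sum>a\<le>N. \<Sum>b\<le>k. (of_nat (N choose a) * of_nat (k choose b) * cnj \<omega>^b * \<omega>^(k-b))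
       * (\<zeta>^(a+b) * cnj \<zeta>^(N+k-(a+b))))"
  proof (intro sum.cong refl)
    fix a b assume a: "a \<in> {..N}" and b: "b \<in> {..k}"
    have e: "N + k - (a+b) = (N - a) + (k - b)" using a b by auto
    show "(of_nat (N choose a) * \<zeta>^a * cnj \<zeta>^(N-a)) * (of_nat (k choose b) * (\<zeta>*cnj \<omega>)^b * (cnj \<zeta> * \<omega>)^(k-b))
      = (of_nat (N choose a) * of_nat (k choose b) * cnj \<omega>^b * \<omega>^(k-b)) * (\<zeta>^(a+b) * cnj \<zeta>^(N+k-(a+b)))"
      unfolding e by (simp add: power_add power_mult_distrib mult_ac)
  qed
  finally show ?thesis by (simp add: \<zeta>_def \<omega>_def)
qed

lemma G1_zeta:
  assumes P: "P \<in> G1" and o: "orthonormal2 e f"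
  shows "\<exists>u1 u2. bf P e e = u1^2 \<and> bf P f f = u2^2 \<and> bf P e f = u1 * u2 \<and>
     (\<forall>y1 y2. bf P e (y1 *\<^sub>R e + y2 *\<^sub>R f) = u1 * (y1*u1 + y2*u2)) \<and>
     (\<forall>p q. even (p+q) \<longrightarrow> Complex u1 u2^p * cnj (Complex u1 u2)^q =
         M3 e f (min p q) ((p - min p q) div 2) ((q - min p q) div 2) P)"
proof -
  obtain u where u: "norm u = 1" "\<And>a b. bf P a b = (u \<bullet> a) * (u \<bullet> b)"
    using G1_rank_one[OF P] by blast
  define u1 where "u1 = u \<bullet> e"
  define u2 where "u2 = u \<bullet> f"
  have W: "complex_of_real (Wf e f P) = Complex u1 u2 * cnj (Complex u1 u2)"
    by (simp add: Wf_def u(2) u1_def u2_def complex_eq_iff power2_eq_square)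
  have Zp: "Zp e f P = Complex u1 u2 ^ 2"
    by (simp add: Zp_def u(2) u1_def u2_def complex_eq_iff power2_eq_square)
  have Zm: "Zm e f P = cnj (Complex u1 u2) ^ 2"
    by (simp add: Zm_def u(2) u1_def u2_def complex_eq_iff power2_eq_square)
  show ?thesis
  proof (intro exI conjI allI impI)
    show "bf P e e = u1^2" "bf P f f = u2^2" "bf P e f = u1 * u2"
      by (simp_all add: u(2) u1_def u2_def power2_eq_square)
    show "bf P e (y1 *\<^sub>R e + y2 *\<^sub>R f) = u1 * (y1*u1 + y2*u2)" for y1 y2
      by (simp add: u(2) u1_def u2_def inner_add_right)
    show "Complex u1 u2^p * cnj (Complex u1 u2)^q =
         M3 e f (min p q) ((p - min p q) div 2) ((q - min p q) div 2) P" if "even (p+q)" for p q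
      unfolding M3_def W Zp Zm by (rule split_pow[OF that])
  qed
qed

locale OI =
  fixes \<sigma> :: "(real^'n^'n) measure"
  assumes oi: "orth_inv_prob_on_G1 \<sigma>"
begin

lemma sets_sigma: "sets \<sigma> = sets borel"
  using oi by (simp add: orth_inv_prob_on_G1_def)

lemma prob: "prob_space \<sigma>"
  using oi by (simp add: orth_inv_prob_on_G1_def)

lemma meas_iff:
  fixes f :: "_ \<Rightarrow> 'b::topological_space"
  shows "f \<in> borel_measurable \<sigma> \<longleftrightarrow> f \<in> borel_measurable borel"
proof -
  have "\<sigma> \<rightarrow>\<^sub>M (borel::'b measure) = borel \<rightarrow>\<^sub>M borel" by (rule measurable_cong_sets[OF sets_sigma refl])
  then show ?thesis by simp
qed

lemma AE_G1: "AE P in \<sigma>. P \<in> G1"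
proof -
  have "emeasure \<sigma> G1 = 1" using oi by (simp add: orth_inv_prob_on_G1_def)
  then have "measure \<sigma> G1 = 1" by (simp add: measure_def)
  then show ?thesis using prob_space.AE_prob_1[OF prob] by blast
qed

lemma inv_int:
  fixes g :: "real^'n^'n \<Rightarrow> 'b::{banach, second_countable_topology}"
  assumes Q: "orthogonal_matrix Q" and g: "g \<in> borel_measurable borel"
  shows "(\<integral>P. g (Q ** P ** transpose Q) \<partial>\<sigma>) = (\<integral>P. g P \<partial>\<sigma>)"
proof -
  have h: "(\<lambda>P. Q ** P ** transpose Q) \<in> \<sigma> \<rightarrow>\<^sub>M \<sigma>"
    using measurable_cong_sets[OF sets_sigma sets_sigma] meas_conj by blast
  have d: "distr \<sigma> \<sigma> (\<lambda>P. Q ** P ** transpose Q) = \<sigma>"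
    using oi Q by (simp add: orth_inv_prob_on_G1_def)
  have gm: "g \<in> borel_measurable \<sigma>" using g meas_iff by blast
  have "(\<integral>P. g P \<partial>\<sigma>) = integral\<^sup>L (distr \<sigma> \<sigma> (\<lambda>P. Q ** P ** transpose Q)) g"
    by (simp add: d)
  also have "\<dots> = (\<integral>P. g (Q ** P ** transpose Q) \<partial>\<sigma>)"
    by (rule integral_distr[OF h gm])
  finally show ?thesis by simp
qed

lemma M3_int_zero:
  assumes o: "orthonormal2 e f" and rs: "r \<noteq> t"
  shows "(\<integral>P. M3 e f q r t P \<partial>\<sigma>) = 0"
proof -
  define \<theta> where "\<theta> = pi / (2 * (real r - real t))"
  define Q where "Q = transpose (matrix (rot (cos \<theta>) (sin \<theta>) e f))"
  have cs: "(cos \<theta>)\<^sup>2 + (sin \<theta>)\<^sup>2 = 1" by simp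
  note RM = rot_matrix[OF o cs, folded Q_def]
  have rt: "real r - real t \<noteq> 0" using rs by simp
  have fac: "cis (2*\<theta>) ^ r * cis (-(2*\<theta>)) ^ t = -1"
  proof -
    have "cis (2*\<theta>) ^ r * cis (-(2*\<theta>)) ^ t = cis (real r * (2*\<theta>)) * cis (real t * (-(2*\<theta>)))"
      by (simp only: Complex.DeMoivre)
    also have "\<dots> = cis (real r * (2*\<theta>) + real t * (-(2*\<theta>)))"
      by (simp only: cis_mult)
    also have "real r * (2*\<theta>) + real t * (-(2*\<theta>)) = pi"
    proof -
      have t2: "2*\<theta> = pi / (real r - real t)"
        unfolding \<theta>_def using rt by (simp add: field_simps)
      have "real r * (2*\<theta>) + real t * (-(2*\<theta>)) = (real r - real t) * (2*\<theta>)"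
        by (simp add: algebra_simps)
      also have "\<dots> = pi" using rt by (simp add: t2)
      finally show ?thesis .
    qed
    finally show ?thesis by simp
  qed
  have "(\<integral>P. M3 e f q r t P \<partial>\<sigma>) = (\<integral>P. M3 e f q r t (Q ** P ** transpose Q) \<partial>\<sigma>)"
    by (rule inv_int[OF RM(1), symmetric]) measurable
  also have "\<dots> = (\<integral>P. (-1) * M3 e f q r t P \<partial>\<sigma>)"
  proof (rule integral_cong_AE)
    show "(\<lambda>P. M3 e f q r t (Q ** P ** transpose Q)) \<in> borel_measurable \<sigma>"
      unfolding meas_iff using meas_conj by measurable
    show "(\<lambda>P. (-1) * M3 e f q r t P) \<in> borel_measurable \<sigma>"
      unfolding meas_iff by measurable
    show "AE P in \<sigma>. M3 e f q r t (Q ** P ** transpose Q) = (-1) * M3 e f q r t P"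
      using AE_G1
    proof eventually_elim
      case (elim P)
      then have sym: "transpose P = P" by (simp add: G1_def)
      have "M3 e f q r t (Q ** P ** transpose Q) = cis (2*\<theta>) ^ r * cis (-(2*\<theta>)) ^ t * M3 e f q r t P"
        by (rule rot_transform[OF o sym]) (simp only: bf_conj RM(2))
      then show ?case using fac by simp
    qed
  qed
  also have "\<dots> = - (\<integral>P. M3 e f q r t P \<partial>\<sigma>)" by simp
  finally show ?thesis by simp
qed


lemma bf_bound:
  assumes "P \<in> G1" "norm a = 1" "norm b = 1"
  shows "\<bar>bf P a b\<bar> \<le> 1"
proof -
  obtain u where u: "norm u = 1" "\<And>a b. bf P a b = (u \<bullet> a) * (u \<bullet> b)"
    using G1_rank_one[OF assms(1)] by blast
  have "\<bar>u \<bullet> a\<bar> \<le> 1" using Cauchy_Schwarz_ineq2[of u a] u(1) assms by simp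
  moreover have "\<bar>u \<bullet> b\<bar> \<le> 1" using Cauchy_Schwarz_ineq2[of u b] u(1) assms by simp
  ultimately show ?thesis by (simp add: u(2) abs_mult mult_le_one)
qed

lemma finite_sigma: "finite_measure \<sigma>"
  using prob by (simp add: prob_space_def)

lemma integrable_M3:
  assumes o: "orthonormal2 e f"
  shows "integrable \<sigma> (M3 e f q r t)"
proof (rule finite_measure.integrable_const_bound[OF finite_sigma])
  show "M3 e f q r t \<in> borel_measurable \<sigma>" unfolding meas_iff by measurable
  show "AE P in \<sigma>. norm (M3 e f q r t P) \<le> 2^q * 4^r * 4^t"
    using AE_G1
  proof eventually_elim
    case (elim P)
    have ne: "norm e = 1" and nf: "norm f = 1" using o by (auto simp: orthonormal2_def)
    have b1: "\<bar>bf P e e\<bar> \<le> 1" "\<bar>bf P f f\<bar> \<le> 1" "\<bar>bf P e f\<bar> \<le> 1"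
      using bf_bound[OF elim] ne nf by auto
    have W0: "\<bar>Wf e f P\<bar> \<le> 2"
      unfolding Wf_def using b1 by (simp add: abs_le_iff)
    have W: "norm (complex_of_real (Wf e f P)) \<le> 2"
      unfolding norm_of_real by (rule W0)
    have Zp: "norm (Zp e f P) \<le> 4"
    proof -
      have "norm (Zp e f P) \<le> norm (complex_of_real (bf P e e - bf P f f)) + norm (\<i> * complex_of_real (2 * bf P e f))"
        unfolding Zp_def by (rule norm_triangle_ineq)
      also have "\<dots> = \<bar>bf P e e - bf P f f\<bar> + 2 * \<bar>bf P e f\<bar>"
        by (simp add: norm_mult del: of_real_diff)
      also have "\<dots> \<le> 4"
        using b1 abs_triangle_ineq4[of "bf P e e" "bf P f f"] by linarith
      finally show ?thesis .
    qed
    have Zm: "norm (Zm e f P) \<le> 4"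
    proof -
      have "norm (Zm e f P) \<le> norm (complex_of_real (bf P e e - bf P f f)) + norm (\<i> * complex_of_real (2 * bf P e f))"
        unfolding Zm_def by (rule norm_triangle_ineq4)
      also have "\<dots> = \<bar>bf P e e - bf P f f\<bar> + 2 * \<bar>bf P e f\<bar>"
        by (simp add: norm_mult del: of_real_diff)
      also have "\<dots> \<le> 4"
        using b1 abs_triangle_ineq4[of "bf P e e" "bf P f f"] by linarith
      finally show ?thesis .
    qed
    have "norm (M3 e f q r t P) = norm (complex_of_real (Wf e f P)) ^ q * norm (Zp e f P) ^ r * norm (Zm e f P) ^ t"
      by (simp add: M3_def norm_mult norm_power)
    also have "\<dots> \<le> 2^q * 4^r * 4^t"
      by (intro mult_mono power_mono W Zp Zm) auto
    finally show ?case .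
  qed
qed


lemma int_mono:
  assumes o: "orthonormal2 e f" and ev: "even (p + q)"
  shows "(\<integral>P. M3 e f (min p q) ((p - min p q) div 2) ((q - min p q) div 2) P \<partial>\<sigma>) =
     (if p = q then (\<integral>P. complex_of_real (Wf e f P) ^ p \<partial>\<sigma>) else 0)"
proof (cases "p = q")
  case True
  then show ?thesis by (simp add: M3_def)
next
  case False
  have "(p - min p q) div 2 \<noteq> (q - min p q) div 2"
  proof (cases "p \<le> q")
    case True
    have "even (q - p)" using ev True by auto
    then obtain j where j: "q - p = 2*j" by (rule evenE)
    then have "j > 0" using True False by auto
    then show ?thesis using True j by simp
  next
    case False2: False
    have "even (p - q)" using ev False2 by auto
    then obtain j where j: "p - q = 2*j" by (rule evenE)
    then have "j > 0" using False2 False by auto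
    then show ?thesis using False2 j by simp
  qed
  then show ?thesis using False M3_int_zero[OF o] by simp
qed

lemma T_formula:
  assumes o: "orthonormal2 e f" and kN: "k \<le> N" and ev: "even (N + k)"
  shows "complex_of_real (\<integral>P. bf P e (y1 *\<^sub>R e + y2 *\<^sub>R f) ^ k * bf P e e ^ ((N-k) div 2) \<partial>\<sigma>) =
    (\<Sum>b\<le>k. of_nat (N choose ((N+k) div 2 - b)) * of_nat (k choose b) * cnj (Complex y1 y2)^b * (Complex y1 y2)^(k-b))
     * (\<integral>P. complex_of_real (Wf e f P) ^ ((N+k) div 2) \<partial>\<sigma>) / 2^(N+k)"
proof -
  define n where "n = N + k"
  define \<omega> where "\<omega> = Complex y1 y2"
  define c where "c a b = of_nat (N choose a) * of_nat (k choose b) * cnj \<omega>^b * \<omega>^(k-b)" for a b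
  define mono where "mono p q = M3 e f (min p q) ((p - min p q) div 2) ((q - min p q) div 2)" for p q
  define EW where "EW = (\<integral>P. complex_of_real (Wf e f P) ^ (n div 2) \<partial>\<sigma>)"
  have mono_meas: "mono p q \<in> borel_measurable borel" for p q unfolding mono_def by measurable
  have mono_int: "integrable \<sigma> (mono p q)" for p q unfolding mono_def by (rule integrable_M3[OF o])
  have "complex_of_real (\<integral>P. bf P e (y1 *\<^sub>R e + y2 *\<^sub>R f) ^ k * bf P e e ^ ((N-k) div 2) \<partial>\<sigma>)
      = (\<integral>P. complex_of_real (bf P e (y1 *\<^sub>R e + y2 *\<^sub>R f) ^ k * bf P e e ^ ((N-k) div 2)) \<partial>\<sigma>)"
    by (rule integral_complex_of_real[symmetric])
  also have "\<dots> = (\<integral>P. (\<Sum>a\<le>N. \<Sum>b\<le>k. c a b * mono (a+b) (n-(a+b)) P) / 2^n \<partial>\<sigma>)"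
  proof (rule integral_cong_AE)
    show "(\<lambda>P. complex_of_real (bf P e (y1 *\<^sub>R e + y2 *\<^sub>R f) ^ k * bf P e e ^ ((N-k) div 2))) \<in> borel_measurable \<sigma>"
      unfolding meas_iff by measurable
    show "(\<lambda>P. (\<Sum>a\<le>N. \<Sum>b\<le>k. c a b * mono (a+b) (n-(a+b)) P) / 2^n) \<in> borel_measurable \<sigma>"
      unfolding meas_iff using mono_meas by measurable
    show "AE P in \<sigma>. complex_of_real (bf P e (y1 *\<^sub>R e + y2 *\<^sub>R f) ^ k * bf P e e ^ ((N-k) div 2))
        = (\<Sum>a\<le>N. \<Sum>b\<le>k. c a b * mono (a+b) (n-(a+b)) P) / 2^n"
      using AE_G1
    proof eventually_elim
      case (elim P)
      obtain u1 u2 where u: "bf P e e = u1^2" "\<And>y1 y2. bf P e (y1 *\<^sub>R e + y2 *\<^sub>R f) = u1 * (y1*u1 + y2*u2)"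
        "\<And>p q. even (p+q) \<Longrightarrow> Complex u1 u2^p * cnj (Complex u1 u2)^q =
         M3 e f (min p q) ((p - min p q) div 2) ((q - min p q) div 2) P"
        using G1_zeta[OF elim o] by blast
      have "complex_of_real (bf P e (y1 *\<^sub>R e + y2 *\<^sub>R f) ^ k * bf P e e ^ ((N-k) div 2))
        = (\<Sum>a\<le>N. \<Sum>b\<le>k. c a b * (Complex u1 u2^(a+b) * cnj (Complex u1 u2)^(N+k-(a+b)))) / 2^(N+k)"
        unfolding u(1) u(2) c_def \<omega>_def by (rule alg_expand[OF kN ev])
      also have "\<dots> = (\<Sum>a\<le>N. \<Sum>b\<le>k. c a b * mono (a+b) (n-(a+b)) P) / 2^n"
      proof -
        have "(\<Sum>a\<le>N. \<Sum>b\<le>k. c a b * (Complex u1 u2^(a+b) * cnj (Complex u1 u2)^(N+k-(a+b))))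
           = (\<Sum>a\<le>N. \<Sum>b\<le>k. c a b * mono (a+b) (n-(a+b)) P)"
        proof (intro sum.cong refl)
          fix a b assume a: "a \<in> {..N}" and b: "b \<in> {..k}"
          have "even ((a+b) + (N+k-(a+b)))" using a b ev by auto
          then show "c a b * (Complex u1 u2^(a+b) * cnj (Complex u1 u2)^(N+k-(a+b))) = c a b * mono (a+b) (n-(a+b)) P"
            using u(3) by (simp add: mono_def n_def)
        qed
        then show ?thesis by (simp add: n_def)
      qed
      finally show ?case .
    qed
  qed
  also have "\<dots> = (\<integral>P. (\<Sum>a\<le>N. \<Sum>b\<le>k. c a b * mono (a+b) (n-(a+b)) P) \<partial>\<sigma>) / 2^n"
    by (rule integral_divide_zero)
  also have "(\<integral>P. (\<Sum>a\<le>N. \<Sum>b\<le>k. c a b * mono (a+b) (n-(a+b)) P) \<partial>\<sigma>)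
      = (\<Sum>a\<le>N. \<Sum>b\<le>k. c a b * (\<integral>P. mono (a+b) (n-(a+b)) P \<partial>\<sigma>))"
  proof -
    have "(\<integral>P. (\<Sum>a\<le>N. \<Sum>b\<le>k. c a b * mono (a+b) (n-(a+b)) P) \<partial>\<sigma>)
      = (\<Sum>a\<le>N. (\<integral>P. (\<Sum>b\<le>k. c a b * mono (a+b) (n-(a+b)) P) \<partial>\<sigma>))"
      by (rule Bochner_Integration.integral_sum) (intro Bochner_Integration.integrable_sum integrable_mult_right mono_int)
    also have "\<dots> = (\<Sum>a\<le>N. \<Sum>b\<le>k. (\<integral>P. c a b * mono (a+b) (n-(a+b)) P \<partial>\<sigma>))"
      by (intro sum.cong refl Bochner_Integration.integral_sum integrable_mult_right mono_int)
    also have "\<dots> = (\<Sum>a\<le>N. \<Sum>b\<le>k. c a b * (\<integral>P. mono (a+b) (n-(a+b)) P \<partial>\<sigma>))"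
      by simp
    finally show ?thesis .
  qed
  also have "(\<Sum>a\<le>N. \<Sum>b\<le>k. c a b * (\<integral>P. mono (a+b) (n-(a+b)) P \<partial>\<sigma>))
      = (\<Sum>a\<le>N. \<Sum>b\<le>k. c a b * (if 2*(a+b) = n then EW else 0))"
  proof (intro sum.cong refl)
    fix a b assume a: "a \<in> {..N}" and b: "b \<in> {..k}"
    have ev2: "even ((a+b) + (n-(a+b)))" using a b ev by (auto simp: n_def)
    have "(a + b = n - (a+b)) \<longleftrightarrow> 2*(a+b) = n" using a b by (auto simp: n_def)
    moreover have "2*(a+b) = n \<Longrightarrow> a + b = n div 2" by auto
    ultimately show "c a b * (\<integral>P. mono (a+b) (n-(a+b)) P \<partial>\<sigma>) = c a b * (if 2*(a+b) = n then EW else 0)"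
      unfolding mono_def int_mono[OF o ev2] EW_def by auto
  qed
  also have "\<dots> = (\<Sum>b\<le>k. \<Sum>a\<le>N. c a b * (if 2*(a+b) = n then EW else 0))"
    by (rule sum.swap)
  also have "\<dots> = (\<Sum>b\<le>k. c (n div 2 - b) b * EW)"
  proof (intro sum.cong refl)
    fix b assume b: "b \<in> {..k}"
    have "(\<Sum>a\<le>N. c a b * (if 2*(a+b) = n then EW else 0)) = (\<Sum>a\<le>N. if a = n div 2 - b then c a b * EW else 0)"
    proof (intro sum.cong refl)
      fix a assume a: "a \<in> {..N}"
      obtain h where h: "N + k = 2*h" using ev by (rule evenE)
      have "k \<le> h" using kN h by simp
      then have "2*(a+b) = n \<longleftrightarrow> a = n div 2 - b" using b h by (auto simp: n_def)
      then show "c a b * (if 2*(a+b) = n then EW else 0) = (if a = n div 2 - b then c a b * EW else 0)"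
        by simp
    qed
    also have "\<dots> = c (n div 2 - b) b * EW"
      using kN by (simp add: sum.delta n_def)
    finally show "(\<Sum>a\<le>N. c a b * (if 2*(a+b) = n then EW else 0)) = c (n div 2 - b) b * EW" .
  qed
  finally show ?thesis
    by (simp add: c_def \<omega>_def n_def EW_def sum_distrib_right)
qed


lemma W_from_c:
  assumes o: "orthonormal2 e f"
  shows "(\<integral>P. complex_of_real (Wf e f P) ^ q \<partial>\<sigma>) =
     2^(2*q) * complex_of_real (\<integral>P. bf P e e ^ q \<partial>\<sigma>) / of_nat ((2*q) choose q)"
proof -
  have "complex_of_real (\<integral>P. bf P e (0 *\<^sub>R e + 0 *\<^sub>R f) ^ 0 * bf P e e ^ ((2*q - 0) div 2) \<partial>\<sigma>) =
    (\<Sum>b\<le>0. of_nat ((2*q) choose ((2*q+0) div 2 - b)) * of_nat (0 choose b) * cnj (Complex 0 0)^b * (Complex 0 0)^(0-b))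
     * (\<integral>P. complex_of_real (Wf e f P) ^ ((2*q+0) div 2) \<partial>\<sigma>) / 2^(2*q+0)"
    by (rule T_formula[OF o]) auto
  then have "complex_of_real (\<integral>P. bf P e e ^ q \<partial>\<sigma>) =
     of_nat ((2*q) choose q) * (\<integral>P. complex_of_real (Wf e f P) ^ q \<partial>\<sigma>) / 2^(2*q)"
    by simp
  moreover have "of_nat ((2*q) choose q) \<noteq> (0::complex)" by simp
  ultimately show ?thesis by (simp add: field_simps)
qed

definition a0 :: "real^'n" where "a0 = axis undefined 1"

definition Cq :: "nat \<Rightarrow> real" where
  "Cq q = (\<integral>P. bf P a0 a0 ^ q \<partial>\<sigma>)"

lemma c_indep:
  assumes e: "norm e = 1"
  shows "(\<integral>P. bf P e e ^ q \<partial>\<sigma>) = Cq q"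
proof -
  obtain A where A: "orthogonal_matrix A" "A *v axis undefined 1 = e"
    using orthogonal_matrix_exists_basis[OF e] by blast
  have Ae: "transpose A *v e = a0"
  proof -
    have "transpose A *v e = (transpose A ** A) *v axis undefined 1"
      using A(2) by (simp add: matrix_vector_mul_assoc[symmetric])
    also have "\<dots> = a0" using A(1) by (simp add: orthogonal_matrix_def a0_def)
    finally show ?thesis .
  qed
  have "(\<integral>P. bf P e e ^ q \<partial>\<sigma>) = (\<integral>P. bf (A ** P ** transpose A) e e ^ q \<partial>\<sigma>)"
    by (rule inv_int[OF A(1), symmetric]) measurable
  also have "\<dots> = Cq q" unfolding Cq_def by (simp only: bf_conj Ae)
  finally show ?thesis .
qed

lemma integrable_bfpow:
  assumes "norm a = 1" "norm b = 1"
  shows "integrable \<sigma> (\<lambda>P. bf P a b ^ q)"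
proof (rule finite_measure.integrable_const_bound[OF finite_sigma])
  show "(\<lambda>P. bf P a b ^ q) \<in> borel_measurable \<sigma>" unfolding meas_iff by measurable
  show "AE P in \<sigma>. norm (bf P a b ^ q) \<le> 1"
    using AE_G1
  proof eventually_elim
    case (elim P)
    have "\<bar>bf P a b\<bar> \<le> 1" using bf_bound[OF elim assms] .
    then have "\<bar>bf P a b\<bar> ^ q \<le> 1" by (simp add: power_le_one)
    then show ?case by (simp add: power_abs)
  qed
qed

lemma Cq_pos: "Cq q > 0"
proof (rule ccontr)
  assume "\<not> Cq q > 0"
  have nonneg: "AE P in \<sigma>. 0 \<le> bf P a a ^ q" for a
    using AE_G1
  proof eventually_elim
    case (elim P)
    obtain u where u: "\<And>a b. bf P a b = (u \<bullet> a) * (u \<bullet> b)"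
      using G1_rank_one[OF elim] by blast
    show ?case by (simp add: u)
  qed
  have "Cq q \<ge> 0" unfolding Cq_def by (rule integral_nonneg_AE[OF nonneg])
  then have C0: "Cq q = 0" using \<open>\<not> Cq q > 0\<close> by simp
  have "AE P in \<sigma>. bf P (axis i 1) (axis i 1) ^ q = 0" for i
  proof -
    have "(\<integral>P. bf P (axis i 1) (axis i 1) ^ q \<partial>\<sigma>) = 0"
      using c_indep[of "axis i 1" q] C0 by (simp add: norm_axis_1)
    then show ?thesis
      using integral_nonneg_eq_0_iff_AE[OF integrable_bfpow[OF norm_axis_1 norm_axis_1] nonneg] by simp
  qed
  then have "AE P in \<sigma>. \<forall>i\<in>UNIV. bf P (axis i 1) (axis i 1) ^ q = 0"
    by (intro AE_finite_allI) auto
  then have "AE P in \<sigma>. False"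
    using AE_G1
  proof eventually_elim
    case (elim P)
    obtain u where u: "norm u = 1" "\<And>a b. bf P a b = (u \<bullet> a) * (u \<bullet> b)"
      using G1_rank_one[OF elim(2)] by blast
    have "\<forall>i. u $ i = 0" using elim(1) by (simp add: u(2) inner_axis)
    then have "u = 0" by (simp add: vec_eq_iff)
    then show ?case using u(1) by simp
  qed
  then show False using prob_space.AE_False[OF prob] by simp
qed

lemma H_formula:
  assumes o: "orthonormal2 e f" and kN: "k \<le> N" and ev: "even (N + k)"
  shows "(\<integral>P. bf P e (y1 *\<^sub>R e + y2 *\<^sub>R f) ^ k * bf P e e ^ ((N-k) div 2) \<partial>\<sigma>) =
    Cq ((N+k) div 2) / real ((2 * ((N+k) div 2)) choose ((N+k) div 2)) *
    (\<Sum>b\<le>k. real (N choose ((N+k) div 2 - b)) * real (k choose b) * Re (cnj (Complex y1 y2)^b * (Complex y1 y2)^(k-b)))"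
proof -
  define h where "h = (N+k) div 2"
  have h2: "N + k = 2*h" using ev unfolding h_def by auto
  have ne: "norm e = 1" using o by (simp add: orthonormal2_def)
  define S where "S = (\<Sum>b\<le>k. of_nat (N choose ((N+k) div 2 - b)) * of_nat (k choose b) * cnj (Complex y1 y2)^b * (Complex y1 y2)^(k-b))"
  have "complex_of_real (\<integral>P. bf P e (y1 *\<^sub>R e + y2 *\<^sub>R f) ^ k * bf P e e ^ ((N-k) div 2) \<partial>\<sigma>)
     = S * (\<integral>P. complex_of_real (Wf e f P) ^ h \<partial>\<sigma>) / 2^(N+k)"
    unfolding S_def h_def by (rule T_formula[OF o kN ev])
  also have "\<dots> = S * complex_of_real (Cq h) / of_nat ((2*h) choose h)"
    unfolding W_from_c[OF o] c_indep[OF ne] h2 by simp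
  finally have eq: "complex_of_real (\<integral>P. bf P e (y1 *\<^sub>R e + y2 *\<^sub>R f) ^ k * bf P e e ^ ((N-k) div 2) \<partial>\<sigma>)
     = S * complex_of_real (Cq h / real ((2*h) choose h))" by simp
  have "(\<integral>P. bf P e (y1 *\<^sub>R e + y2 *\<^sub>R f) ^ k * bf P e e ^ ((N-k) div 2) \<partial>\<sigma>)
      = Re (S * complex_of_real (Cq h / real ((2*h) choose h)))"
    unfolding eq[symmetric] by simp
  also have "\<dots> = Cq h / real ((2*h) choose h) * Re S" by simp
  also have "Re S = (\<Sum>b\<le>k. real (N choose ((N+k) div 2 - b)) * real (k choose b) * Re (cnj (Complex y1 y2)^b * (Complex y1 y2)^(k-b)))"
    unfolding S_def Re_sum by (intro sum.cong refl) (simp add: mult.assoc)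
  finally show ?thesis by (simp add: h_def)
qed

lemma hs_outer: "hs_inner P (outer a b) = bf P b a"
  unfolding hs_inner_def trace_def matrix_matrix_mult_def outer_def bf_def inner_vec_def matrix_vector_mult_def
  by (simp add: sum_distrib_left mult_ac)

lemma hs_Exy: "hs_inner P (Exy a b) = (bf P b a + bf P a b) / 2"
  unfolding hs_inner_def trace_def matrix_matrix_mult_def Exy_def outer_def bf_def inner_vec_def matrix_vector_mult_def
  by (simp add: sum_distrib_left sum.distrib sum_divide_distrib algebra_simps)

lemma mu1_bf: "mu1 \<sigma> p q (Exy x y) (outer x x) = (\<integral>P. bf P x y ^ p * bf P x x ^ q \<partial>\<sigma>)"
  unfolding mu1_def
proof (rule integral_cong_AE)
  show "(\<lambda>P. hs_inner P (Exy x y) ^ p * hs_inner P (outer x x) ^ q) \<in> borel_measurable \<sigma>"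
    unfolding meas_iff hs_Exy hs_outer by measurable
  show "(\<lambda>P. bf P x y ^ p * bf P x x ^ q) \<in> borel_measurable \<sigma>"
    unfolding meas_iff by measurable
  show "AE P in \<sigma>. hs_inner P (Exy x y) ^ p * hs_inner P (outer x x) ^ q = bf P x y ^ p * bf P x x ^ q"
    using AE_G1
  proof eventually_elim
    case (elim P)
    then have "transpose P = P" by (simp add: G1_def)
    then show ?case by (simp add: hs_Exy hs_outer bf_sym[of P y x])
  qed
qed

end




definition phi :: "nat \<Rightarrow> nat \<Rightarrow> complex \<Rightarrow> real" where
  "phi m j \<omega> = Re (cnj \<omega> ^ j * \<omega> ^ (m - j))"

lemma complex_cnj_Re_helper: "Re (cnj z) = Re z" by simp

lemma phi_sym: "j \<le> m \<Longrightarrow> phi m (m - j) \<omega> = phi m j \<omega>"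
proof -
  assume j: "j \<le> m"
  have mm: "m - (m - j) = j" using j by simp
  have "cnj \<omega> ^ (m - j) * \<omega> ^ (m - (m - j)) = cnj (cnj \<omega> ^ j * \<omega> ^ (m - j))"
    unfolding mm by (simp add: mult.commute)
  note ceq = this
  have "phi m (m - j) \<omega> = Re (cnj \<omega> ^ (m - j) * \<omega> ^ (m - (m - j)))" by (simp only: phi_def)
  also have "\<dots> = Re (cnj (cnj \<omega> ^ j * \<omega> ^ (m - j)))" by (simp only: ceq)
  also have "\<dots> = phi m j \<omega>" unfolding phi_def by (rule complex_cnj_Re_helper)
  finally show ?thesis .
qed

lemma phi_shift:
  assumes "cmod \<omega> = 1" "2*i + b \<le> m"
  shows "Re (cnj \<omega> ^ b * \<omega> ^ (m - 2*i - b)) = phi m (i + b) \<omega>"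
proof -
  have u: "cnj \<omega> * \<omega> = 1" using complex_norm_square[of \<omega>] assms(1) by (simp add: mult.commute)
  have e: "m - (i + b) = i + (m - 2*i - b)" using assms(2) by simp
  have "cnj \<omega> ^ (i + b) * \<omega> ^ (m - (i + b)) = (cnj \<omega> * \<omega>)^i * (cnj \<omega> ^ b * \<omega> ^ (m - 2*i - b))"
    unfolding e by (simp add: power_add power_mult_distrib mult_ac)
  then show ?thesis unfolding phi_def u by simp
qed

lemma re_pow_phi: "(Re \<omega>)^m = (\<Sum>j\<le>m. (real (m choose j) / 2^m) * phi m j \<omega>)"
proof -
  have h: "complex_of_real (Re \<omega>) = (cnj \<omega> + \<omega>) / 2" by (simp add: complex_eq_iff)
  have "complex_of_real ((Re \<omega>)^m) = (cnj \<omega> + \<omega>)^m / 2^m"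
    by (simp only: of_real_power h power_divide)
  also have "(cnj \<omega> + \<omega>)^m = (\<Sum>j\<le>m. of_nat (m choose j) * cnj \<omega> ^ j * \<omega> ^ (m - j))"
    by (rule binomial_ring)
  finally have eq: "complex_of_real ((Re \<omega>)^m) = (\<Sum>j\<le>m. of_nat (m choose j) * cnj \<omega> ^ j * \<omega> ^ (m - j)) / 2^m" .
  have "(Re \<omega>)^m = Re (complex_of_real ((Re \<omega>)^m))" by (simp only: Re_complex_of_real)
  also have "\<dots> = Re ((\<Sum>j\<le>m. of_nat (m choose j) * cnj \<omega> ^ j * \<omega> ^ (m - j)) / 2^m)"
    by (simp only: eq)
  also have "\<dots> = (\<Sum>j\<le>m. (real (m choose j) / 2^m) * phi m j \<omega>)"
    by (simp add: phi_def Re_sum sum_divide_distrib mult.assoc)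
  finally show ?thesis .
qed

lemma lin_solve: "(g::real) = S * p + mid \<Longrightarrow> S > 0 \<Longrightarrow> p = (1 / S) * g + (- 1 / S) * mid"
  by (simp add: field_simps)

locale spanloc =
  fixes m :: nat and g :: "nat \<Rightarrow> complex \<Rightarrow> real" and \<gamma> :: "nat \<Rightarrow> nat \<Rightarrow> real"
  assumes g_eq: "\<And>i \<omega>. i \<le> m div 2 \<Longrightarrow> cmod \<omega> = 1 \<Longrightarrow>
      g i \<omega> = (\<Sum>b\<le>m-2*i. \<gamma> i b * Re (cnj \<omega>^b * \<omega>^(m-2*i-b)))"
    and \<gamma>_pos: "\<And>i b. i \<le> m div 2 \<Longrightarrow> b \<le> m - 2*i \<Longrightarrow> \<gamma> i b > 0"
begin

definition inS :: "(complex \<Rightarrow> real) \<Rightarrow> bool" where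
  "inS F \<longleftrightarrow> (\<exists>a. \<forall>\<omega>. cmod \<omega> = 1 \<longrightarrow> F \<omega> = (\<Sum>i\<le>m div 2. a i * g i \<omega>))"

lemma inS_g: "i \<le> m div 2 \<Longrightarrow> inS (g i)"
  unfolding inS_def
proof (intro exI allI impI)
  fix \<omega> assume i: "i \<le> m div 2"
  have "(\<Sum>ia\<le>m div 2. (if ia = i then 1 else 0) * g ia \<omega>) = (\<Sum>ia\<le>m div 2. if ia = i then g ia \<omega> else 0)"
    by (intro sum.cong) auto
  also have "\<dots> = g i \<omega>" using i by (simp add: sum.delta)
  finally show "g i \<omega> = (\<Sum>ia\<le>m div 2. (if ia = i then 1 else 0) * g ia \<omega>)" by simp
qed

lemma g_phi: "i \<le> m div 2 \<Longrightarrow> cmod \<omega> = 1 \<Longrightarrow> g i \<omega> = (\<Sum>b\<le>m-2*i. \<gamma> i b * phi m (i+b) \<omega>)"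
proof -
  assume i: "i \<le> m div 2" and w: "cmod \<omega> = 1"
  show ?thesis unfolding g_eq[OF i w]
  proof (intro sum.cong refl)
    fix b assume "b \<in> {..m-2*i}"
    then have "b \<le> m - 2*i" by simp
    then have "2*i + b \<le> m" using i by presburger
    then show "\<gamma> i b * Re (cnj \<omega>^b * \<omega>^(m-2*i-b)) = \<gamma> i b * phi m (i+b) \<omega>"
      by (simp only: phi_shift[OF w])
  qed
qed

lemma inS_lin: "inS F \<Longrightarrow> inS G \<Longrightarrow> inS (\<lambda>\<omega>. x * F \<omega> + y * G \<omega>)"
  unfolding inS_def
proof (elim exE)
  fix a b assume a: "\<forall>\<omega>. cmod \<omega> = 1 \<longrightarrow> F \<omega> = (\<Sum>i\<le>m div 2. a i * g i \<omega>)"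
    and b: "\<forall>\<omega>. cmod \<omega> = 1 \<longrightarrow> G \<omega> = (\<Sum>i\<le>m div 2. b i * g i \<omega>)"
  show "\<exists>c. \<forall>\<omega>. cmod \<omega> = 1 \<longrightarrow> x * F \<omega> + y * G \<omega> = (\<Sum>i\<le>m div 2. c i * g i \<omega>)"
    by (rule exI[of _ "\<lambda>i. x * a i + y * b i"])
      (simp add: a b sum_distrib_left sum.distrib algebra_simps)
qed

lemma inS_zero: "inS (\<lambda>_. 0)"
  unfolding inS_def by (rule exI[of _ "\<lambda>_. 0"]) simp

lemma inS_cong: "(\<And>\<omega>. cmod \<omega> = 1 \<Longrightarrow> F \<omega> = G \<omega>) \<Longrightarrow> inS G \<Longrightarrow> inS F"
  unfolding inS_def by auto

lemma inS_sum: "finite A \<Longrightarrow> (\<And>j. j \<in> A \<Longrightarrow> inS (F j)) \<Longrightarrow> inS (\<lambda>\<omega>. \<Sum>j\<in>A. F j \<omega>)"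
proof (induction A rule: finite_induct)
  case empty
  then show ?case using inS_zero by simp
next
  case (insert x A)
  have "inS (\<lambda>\<omega>. 1 * F x \<omega> + 1 * (\<Sum>j\<in>A. F j \<omega>))"
    using insert by (intro inS_lin) auto
  then show ?case using insert by simp
qed

lemma inS_scale: "inS F \<Longrightarrow> inS (\<lambda>\<omega>. x * F \<omega>)"
  using inS_lin[of F F x 0] by simp

lemma phi_in: "s \<le> m div 2 + 1 \<Longrightarrow> \<forall>j. s \<le> j \<and> j \<le> m - s \<longrightarrow> inS (phi m j)"
proof (induction s rule: inc_induct)
  case base
  then show ?case by auto
next
  case (step n)
  have nM: "n \<le> m div 2" using step.hyps by simp
  have phin: "inS (phi m n)"
  proof (cases "m - 2*n = 0")
    case True
    have G: "inS (\<lambda>\<omega>. (1 / \<gamma> n 0) * g n \<omega>)" using inS_g[OF nM] by (rule inS_scale)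
    show ?thesis
    proof (rule inS_cong[OF _ G])
      fix \<omega> :: complex assume w: "cmod \<omega> = 1"
      have "g n \<omega> = \<gamma> n 0 * phi m n \<omega>"
        using g_phi[OF nM w] True by simp
      then show "phi m n \<omega> = (1 / \<gamma> n 0) * g n \<omega>" using \<gamma>_pos[OF nM, of 0] by simp
    qed
  next
    case False
    define L where "L = m - 2*n"
    have L1: "L \<ge> 1" using False L_def by simp
    define mid where "mid \<omega> = (\<Sum>b\<in>{1..<L}. \<gamma> n b * phi m (n + b) \<omega>)" for \<omega>
    have mid_in: "inS mid"
      unfolding mid_def
    proof (rule inS_sum)
      show "finite {1..<L}" by simp
      fix b assume b: "b \<in> {1..<L}"
      then have "inS (phi m (n + b))" using step.IH L_def by auto
      then show "inS (\<lambda>\<omega>. \<gamma> n b * phi m (n + b) \<omega>)" by (rule inS_scale)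
    qed
    have split: "{..L} = insert 0 (insert L {1..<L})" using L1 by auto
    have gsplit: "g n \<omega> = (\<gamma> n 0 + \<gamma> n L) * phi m n \<omega> + mid \<omega>" if "cmod \<omega> = 1" for \<omega>
    proof -
      have "g n \<omega> = (\<Sum>b\<le>L. \<gamma> n b * phi m (n + b) \<omega>)"
        unfolding g_phi[OF nM that] L_def by simp
      also have "\<dots> = \<gamma> n 0 * phi m n \<omega> + (\<gamma> n L * phi m (n + L) \<omega> + mid \<omega>)"
        unfolding split mid_def using L1 by (simp add: sum.insert)
      also have "phi m (n + L) \<omega> = phi m n \<omega>"
        using phi_sym[of n m \<omega>] nM by (simp add: L_def)
      finally show ?thesis by (simp add: algebra_simps)
    qed
    have pos: "\<gamma> n 0 + \<gamma> n L > 0" using \<gamma>_pos[OF nM, of 0] \<gamma>_pos[OF nM, of L] L_def by simp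
    have G: "inS (\<lambda>\<omega>. (1 / (\<gamma> n 0 + \<gamma> n L)) * g n \<omega> + (- 1 / (\<gamma> n 0 + \<gamma> n L)) * mid \<omega>)"
      by (rule inS_lin[OF inS_g[OF nM] mid_in])
    show ?thesis
    proof (rule inS_cong[OF _ G])
      fix \<omega> :: complex assume w: "cmod \<omega> = 1"
      show "phi m n \<omega> = (1 / (\<gamma> n 0 + \<gamma> n L)) * g n \<omega> + (- 1 / (\<gamma> n 0 + \<gamma> n L)) * mid \<omega>"
        using gsplit[OF w] pos by (rule lin_solve)
    qed
  qed
  show ?case
  proof (intro allI impI)
    fix j assume j: "n \<le> j \<and> j \<le> m - n"
    show "inS (phi m j)"
    proof (cases "Suc n \<le> j \<and> j \<le> m - Suc n")
      case True
      then show ?thesis using spec[OF step.IH, of j] by (rule mp[rotated])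
    next
      case False
      then have "j = n \<or> j = m - n" using j by auto
      then show ?thesis
      proof
        assume "j = n" then show ?thesis using phin by simp
      next
        assume jm: "j = m - n"
        have "n \<le> m" using nM by simp
        then have "phi m (m - n) = phi m n" by (intro ext phi_sym)
        then show ?thesis using phin jm by simp
      qed
    qed
  qed
qed

lemma main_span: "\<exists>a. \<forall>\<omega>. cmod \<omega> = 1 \<longrightarrow> (Re \<omega>)^m = (\<Sum>i\<le>m div 2. a i * g i \<omega>)"
proof -
  have "inS (\<lambda>\<omega>. \<Sum>j\<le>m. (real (m choose j) / 2^m) * phi m j \<omega>)"
  proof (rule inS_sum)
    show "finite {..m}" by simp
    fix j assume "j \<in> {..m}"
    then have "inS (phi m j)" using phi_in[of 0] by auto
    then show "inS (\<lambda>\<omega>. (real (m choose j) / 2^m) * phi m j \<omega>)" by (rule inS_scale)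
  qed
  then have "inS (\<lambda>\<omega>. (Re \<omega>)^m)" by (rule inS_cong[rotated]) (simp add: re_pow_phi)
  then show ?thesis unfolding inS_def .
qed

end



lemma card1_vec:
  assumes "CARD('n) = 1"
  shows "(v::real^'n) = (v $ i) *\<^sub>R axis i 1"
proof -
  obtain j :: 'n where U: "UNIV = {j}" using assms by (meson card_1_singletonE)
  have ki: "k = i" for k :: 'n using U by (metis UNIV_I singletonD)
  show ?thesis
  unfolding vec_eq_iff
  proof
    fix k :: 'n
    have "k = i" by (rule ki)
    then show "v $ k = ((v $ i) *\<^sub>R axis i 1) $ k" by (simp add: axis_def)
  qed
qed

lemma two_indices:
  assumes "CARD('n) \<ge> 2"
  shows "\<exists>i k :: 'n. i \<noteq> k"
proof (rule ccontr)
  assume "\<not> (\<exists>i k :: 'n. i \<noteq> k)"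
  then have "UNIV = {undefined :: 'n}" by auto
  then have "card (UNIV :: 'n set) = card {undefined :: 'n}" by (rule arg_cong)
  then have "CARD('n) = 1" by simp
  then show False using assms by simp
qed

lemma exists_f:
  assumes d2: "CARD('n) \<ge> 2" and e: "norm (e::real^'n) = 1"
  shows "\<exists>f. orthonormal2 e f \<and> y = (e \<bullet> y) *\<^sub>R e + (f \<bullet> y) *\<^sub>R f"
proof -
  have ee: "e \<bullet> e = 1" using e by (simp add: power2_norm_eq_inner[symmetric])
  show ?thesis
  proof (cases "y - (e \<bullet> y) *\<^sub>R e = 0")
    case False
    define v where "v = y - (e \<bullet> y) *\<^sub>R e"
    have v0: "v \<noteq> 0" using False by (simp add: v_def)
    define f where "f = (1 / norm v) *\<^sub>R v"
    have ve: "v \<bullet> e = 0" unfolding v_def inner_diff_left by (simp add: ee inner_commute)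
    have yv: "y = v + (e \<bullet> y) *\<^sub>R e" by (simp add: v_def)
    have ev: "e \<bullet> v = 0" using ve by (simp add: inner_commute)
    have vy: "v \<bullet> y = v \<bullet> v"
      by (subst yv) (simp add: inner_add_right ve ev)
    have nf: "norm f = 1" using v0 by (simp add: f_def)
    have ef: "e \<bullet> f = 0" by (simp add: f_def ev)
    have fy: "f \<bullet> y = norm v" using v0 by (simp add: f_def vy power2_norm_eq_inner[symmetric] power2_eq_square)
    have "(f \<bullet> y) *\<^sub>R f = v" unfolding fy using v0 by (simp add: f_def)
    then have "y = (e \<bullet> y) *\<^sub>R e + (f \<bullet> y) *\<^sub>R f" by (simp add: v_def)
    then show ?thesis using e nf ef by (auto simp: orthonormal2_def)
  next
    case True
    obtain i k :: 'n where ik: "i \<noteq> k" using two_indices[OF d2] by blast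
    obtain A where A: "orthogonal_matrix A" "A *v axis k 1 = e"
      using orthogonal_matrix_exists_basis[OF e, where k = k] by blast
    have ot: "orthogonal_transformation ((*v) A)"
      using A(1) by (simp add: orthogonal_transformation_matrix matrix_vector_mul_linear matrix_of_matrix_vector_mul)
    define f where "f = A *v axis i 1"
    have ip: "(A *v a) \<bullet> (A *v b) = a \<bullet> b" for a b
      using ot by (simp add: orthogonal_transformation_def)
    have ef: "e \<bullet> f = 0" unfolding f_def A(2)[symmetric] ip using ik by (simp add: inner_axis_axis)
    have ff: "f \<bullet> f = 1" unfolding f_def ip by (simp add: inner_axis_axis)
    have nf: "norm f = 1" using ff by (simp add: norm_eq_sqrt_inner)
    have y: "y = (e \<bullet> y) *\<^sub>R e" using True by simp
    have fy: "f \<bullet> y = 0" by (subst y) (simp add: inner_commute ef)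
    show ?thesis using e nf ef fy y by (auto simp: orthonormal2_def)
  qed
qed

lemma decomp_x: "\<exists>e. norm e = 1 \<and> (x::real^'n) = norm x *\<^sub>R e"
proof (cases "x = 0")
  case True
  then show ?thesis using norm_axis_1 by (intro exI[of _ "axis undefined 1"]) auto
next
  case False
  then show ?thesis by (intro exI[of _ "(1 / norm x) *\<^sub>R x"]) auto
qed

theorem proposition3p4:
  fixes m l :: nat and \<sigma> :: "(real^'n^'n) measure"
  assumes "CARD('n) \<ge> m + l"
    and "orth_inv_prob_on_G1 \<sigma>"
  shows "\<exists>a :: nat \<Rightarrow> real. \<forall>(x::real^'n) (y::real^'n). norm y = 1 \<longrightarrow>
           (inner x y) ^ m * (norm x) ^ (2 * l) =
           (\<Sum>i = 0..m div 2. a i * mu1 \<sigma> (m - 2 * i) (l + i) (Exy x y) (outer x x))"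
proof -
  interpret OI \<sigma> using assms(2) by unfold_locales
  define N where "N = m + 2*l"
  show ?thesis
  proof (cases "CARD('n) = 1")
    case True
    define a where "a i = (if i = 0 then 1 / Cq (m + l) else 0)" for i :: nat
    show ?thesis
    proof (intro exI allI impI)
      fix x y :: "real^'n" assume "norm y = 1"
      define e :: "real^'n" where "e = axis undefined 1"
      define x0 where "x0 = x $ undefined"
      define y0 where "y0 = y $ undefined"
      have xe: "x = x0 *\<^sub>R e" unfolding x0_def e_def by (rule card1_vec[OF True])
      have ye: "y = y0 *\<^sub>R e" unfolding y0_def e_def by (rule card1_vec[OF True])
      have ee: "e \<bullet> e = 1" by (simp add: e_def inner_axis_axis)
      have ea0: "e = a0" by (simp add: e_def a0_def)
      have "(\<Sum>i = 0..m div 2. a i * mu1 \<sigma> (m - 2 * i) (l + i) (Exy x y) (outer x x))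
          = (\<Sum>i = 0..m div 2. if i = 0 then mu1 \<sigma> m l (Exy x y) (outer x x) / Cq (m + l) else 0)"
        by (intro sum.cong refl) (simp add: a_def)
      also have "\<dots> = mu1 \<sigma> m l (Exy x y) (outer x x) / Cq (m + l)"
        by (simp add: sum.delta)
      also have "mu1 \<sigma> m l (Exy x y) (outer x x) = (\<integral>P. ((x0*y0)^m * x0^(2*l)) * bf P e e ^ (m + l) \<partial>\<sigma>)"
        unfolding mu1_bf
        by (intro Bochner_Integration.integral_cong refl)
           (simp add: xe ye bf_scale_left bf_scale_right power_mult_distrib power_add power_mult power2_eq_square mult_ac)
      also have "\<dots> = (x0*y0)^m * x0^(2*l) * Cq (m + l)"
        by (simp add: Cq_def ea0)
      finally have R: "(\<Sum>i = 0..m div 2. a i * mu1 \<sigma> (m - 2 * i) (l + i) (Exy x y) (outer x x)) = (x0*y0)^m * x0^(2*l)"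
        using Cq_pos[of "m+l"] by simp
      have L: "(inner x y) ^ m * (norm x) ^ (2 * l) = (x0*y0)^m * x0^(2*l)"
      proof -
        have "inner x y = x0 * y0" by (simp add: xe ye ee)
        moreover have "norm x ^ (2*l) = x0^(2*l)"
          by (simp add: xe norm_axis_1 e_def power_mult power2_abs)
        ultimately show ?thesis by simp
      qed
      show "(inner x y) ^ m * (norm x) ^ (2 * l) =
           (\<Sum>i = 0..m div 2. a i * mu1 \<sigma> (m - 2 * i) (l + i) (Exy x y) (outer x x))"
        using L R by simp
    qed
  next
    case False
    have "CARD('n) \<noteq> 0" by simp
    then have d2: "CARD('n) \<ge> 2" using False by linarith
    define h where "h i = (N + (m - 2*i)) div 2" for i
    define \<gamma> where "\<gamma> i b = Cq (h i) / real ((2 * h i) choose (h i)) * (real (N choose (h i - b)) * real ((m - 2*i) choose b))" for i b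
    define g where "g i \<omega> = (\<Sum>b\<le>m-2*i. \<gamma> i b * Re (cnj \<omega>^b * \<omega>^(m-2*i-b)))" for i \<omega>
    have sl: "spanloc m g \<gamma>"
    proof
      show "g i \<omega> = (\<Sum>b\<le>m-2*i. \<gamma> i b * Re (cnj \<omega>^b * \<omega>^(m-2*i-b)))" for i \<omega> by (simp add: g_def)
      fix i b assume i: "i \<le> m div 2" and b: "b \<le> m - 2*i"
      have "h i - b \<le> N" unfolding h_def N_def by simp
      moreover have "h i \<le> 2 * h i" by simp
      ultimately show "\<gamma> i b > 0" unfolding \<gamma>_def using Cq_pos b by (simp add: zero_less_binomial_iff)
    qed
    obtain a where a: "\<And>\<omega>. cmod \<omega> = 1 \<Longrightarrow> (Re \<omega>)^m = (\<Sum>i\<le>m div 2. a i * g i \<omega>)"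
      using spanloc.main_span[OF sl] by blast
    show ?thesis
    proof (intro exI allI impI)
      fix x y :: "real^'n" assume ny: "norm y = 1"
      obtain e where ne: "norm e = 1" and xe: "x = norm x *\<^sub>R e" using decomp_x by blast
      obtain f where o: "orthonormal2 e f" and yef: "y = (e \<bullet> y) *\<^sub>R e + (f \<bullet> y) *\<^sub>R f"
        using exists_f[OF d2 ne] by blast
      define \<rho> where "\<rho> = norm x"
      define \<omega> where "\<omega> = Complex (e \<bullet> y) (f \<bullet> y)"
      have ee: "e \<bullet> e = 1" and ff: "f \<bullet> f = 1" and ef: "e \<bullet> f = 0"
        using o by (auto simp: orthonormal2_def power2_norm_eq_inner[symmetric])
      have "y \<bullet> y = (e \<bullet> y)\<^sup>2 + (f \<bullet> y)\<^sup>2"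
        by (subst (1 2) yef) (simp add: inner_add_left inner_add_right ee ff ef inner_commute power2_eq_square)
      then have w1: "cmod \<omega> = 1" using ny by (simp add: \<omega>_def cmod_def power2_norm_eq_inner[symmetric])
      have key: "mu1 \<sigma> (m - 2 * i) (l + i) (Exy x y) (outer x x) = \<rho>^N * g i \<omega>" if i: "i \<le> m div 2" for i
      proof -
        define k where "k = m - 2*i"
        have im: "2*i \<le> m" using i by presburger
        have Nk: "(N - k) div 2 = l + i" "k \<le> N" "even (N + k)" using im by (auto simp: N_def k_def)
        have "mu1 \<sigma> (m - 2 * i) (l + i) (Exy x y) (outer x x) = (\<integral>P. \<rho>^N * (bf P e y ^ k * bf P e e ^ (l + i)) \<partial>\<sigma>)"
          unfolding mu1_bf k_def[symmetric]
        proof (intro Bochner_Integration.integral_cong refl)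
          fix P
          have eqN: "k + (l + i) * 2 = N" using im by (simp add: k_def N_def)
          have "\<rho>^N = \<rho>^(k + (l+i)*2)" by (simp only: eqN)
          also have "\<dots> = \<rho>^k * (\<rho>^(l+i))^2" by (simp only: power_add power_mult)
          finally have "\<rho>^k * (\<rho>^(l+i))^2 = \<rho>^N" by simp
          then show "bf P x y ^ k * bf P x x ^ (l + i) = \<rho>^N * (bf P e y ^ k * bf P e e ^ (l + i))"
            apply (subst (1 2 3) xe)
            by (simp add: bf_scale_left bf_scale_right power_mult_distrib \<rho>_def[symmetric] power2_eq_square[symmetric] mult_ac)
        qed
        also have "\<dots> = \<rho>^N * (\<integral>P. bf P e y ^ k * bf P e e ^ (l + i) \<partial>\<sigma>)" by simp
        also have "(\<integral>P. bf P e y ^ k * bf P e e ^ (l + i) \<partial>\<sigma>) = g i \<omega>"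
        proof -
          have "(\<integral>P. bf P e y ^ k * bf P e e ^ (l + i) \<partial>\<sigma>)
              = (\<integral>P. bf P e ((e \<bullet> y) *\<^sub>R e + (f \<bullet> y) *\<^sub>R f) ^ k * bf P e e ^ ((N - k) div 2) \<partial>\<sigma>)"
            using yef Nk(1) by simp
          also have "\<dots> = Cq ((N+k) div 2) / real ((2 * ((N+k) div 2)) choose ((N+k) div 2)) *
              (\<Sum>b\<le>k. real (N choose ((N+k) div 2 - b)) * real (k choose b) * Re (cnj \<omega>^b * \<omega>^(k-b)))"
            unfolding \<omega>_def by (rule H_formula[OF o Nk(2) Nk(3)])
          also have "\<dots> = g i \<omega>"
            unfolding g_def \<gamma>_def h_def k_def[symmetric] sum_distrib_left by (intro sum.cong refl) (simp add: mult_ac)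
          finally show ?thesis .
        qed
        finally show ?thesis .
      qed
      have "(\<Sum>i = 0..m div 2. a i * mu1 \<sigma> (m - 2 * i) (l + i) (Exy x y) (outer x x))
          = (\<Sum>i\<le>m div 2. a i * (\<rho>^N * g i \<omega>))"
        unfolding atLeast0AtMost by (intro sum.cong refl) (simp add: key)
      also have "\<dots> = \<rho>^N * (Re \<omega>)^m"
        unfolding a[OF w1] sum_distrib_left by (intro sum.cong refl) (simp add: mult_ac)
      also have "\<dots> = (inner x y) ^ m * (norm x) ^ (2 * l)"
      proof -
        have "inner x y = \<rho> * (e \<bullet> y)" by (subst xe) (simp add: \<rho>_def)
        then show ?thesis by (simp add: \<omega>_def N_def power_add power_mult power_mult_distrib \<rho>_def mult_ac)
      qed
      finally show "(inner x y) ^ m * (norm x) ^ (2 * l) =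
           (\<Sum>i = 0..m div 2. a i * mu1 \<sigma> (m - 2 * i) (l + i) (Exy x y) (outer x x))" by simp
    qed
  qed
qed

end
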